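(* Let $w\in\mathcal H(\mathbb D)$ with $w\not\equiv0$ and let $\varphi$ be an entire function with $\varphi\not\equiv0$. Then the weighted superposition operator $S_{\varphi,w}$ maps $H^\infty_{\log}$ into the Bloch space $\mathcal B$ if and only if $w\in\mathcal B$ and $\varphi$ is constant.
   Context: $\mathcal H(\mathbb D)$ is the space of analytic functions in the unit disc $\mathbb D$; $S_{\varphi,w}(f)(z)=w(z)\varphi(f(z))$. $H^\infty_{\log}$ is the space of $f\in\mathcal H(\mathbb D)$ with $\sup_{z\in\mathbb D}\big(\log\frac{e}{1-|z|}\big)^{-1}|f(z)|<\infty$, i.e. $|f(z)|=O\big(\log\frac1{1-|z|}\big)$ as $|z|\to1$. The Bloch space $\mathcal B$ consists of $f\in\mathcal H(\mathbb D)$ with $\sup_{z\in\mathbb D}(1-|z|^2)|f'(z)|<\infty$. *)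

theory Defs
  imports "HOL-Complex_Analysis.Complex_Analysis"
begin

text \<open>The unit disc is ball 0 1. Functions are total on complex; only values on the disc matter.\<close>

definition H_log_infty :: "(complex \<Rightarrow> complex) set" where
  "H_log_infty = {f. f holomorphic_on ball 0 1 \<and>
     (\<exists>C. \<forall>z\<in>ball 0 1. norm (f z) / ln (exp 1 / (1 - norm z)) \<le> C)}"

definition Bloch :: "(complex \<Rightarrow> complex) set" where
  "Bloch = {f. f holomorphic_on ball 0 1 \<and>
     (\<exists>C. \<forall>z\<in>ball 0 1. (1 - (norm z)\<^sup>2) * norm (deriv f z) \<le> C)}"

definition weighted_superposition ::
  "(complex \<Rightarrow> complex) \<Rightarrow> (complex \<Rightarrow> complex) \<Rightarrow> (complex \<Rightarrow> complex) \<Rightarrow> (complex \<Rightarrow> complex)" where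
  "weighted_superposition \<phi> w f = (\<lambda>z. w z * \<phi> (f z))"

end

theory Submission
  imports Defs
begin


definition kk :: "complex \<Rightarrow> complex" where "kk a = complex_of_real (1 - (cmod a)\<^sup>2)"

lemma norm_kk: "cmod a \<le> 1 \<Longrightarrow> cmod (kk a) = 1 - (cmod a)\<^sup>2"
proof -
  assume "cmod a \<le> 1"
  then have "(cmod a)\<^sup>2 \<le> 1" using norm_ge_zero[of a] by (metis power_le_one)
  then show ?thesis unfolding kk_def norm_of_real by simp
qed

lemma kk_eq: "1 - cnj a * a = kk a"
proof -
  have "complex_of_real ((cmod a)\<^sup>2) = cnj a * a" by (metis complex_norm_square mult.commute)
  then show ?thesis unfolding kk_def of_real_diff by simp
qed

definition blk :: "complex \<Rightarrow> complex \<Rightarrow> complex \<Rightarrow> complex \<Rightarrow> complex" where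
  "blk a p c z = kk a * (c * (z - a) - p * (1 - cnj a * z)) / (1 - cnj a * z)\<^sup>2"

definition blk' :: "complex \<Rightarrow> complex \<Rightarrow> complex \<Rightarrow> complex \<Rightarrow> complex" where
  "blk' a p c z = kk a * ((c + p * cnj a) * (1 - cnj a * z) + 2 * cnj a * (c * (z - a) - p * (1 - cnj a * z))) / (1 - cnj a * z)^3"

lemma alg1: fixes u K X Y b :: complex assumes "u \<noteq> 0"
  shows "K * ((X * u\<^sup>2 - Y * (2 * u * (- b))) / (u\<^sup>2 * u\<^sup>2)) = K * (X * u + 2 * b * Y) / u ^ 3"
  using assms by (simp add: field_simps power2_eq_square power3_eq_cube)

lemma alg2: fixes K c p b :: complex assumes "K \<noteq> 0"
  shows "K * (K * ((c + p * b) * K + 2 * b * (c * 0 - p * K)) / K ^ 3) = c - p * b"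
  using assms by (simp add: field_simps power2_eq_square power3_eq_cube)

lemma blk_deriv:
  assumes u: "1 - cnj a * z \<noteq> 0"
  shows "(blk a p c has_field_derivative blk' a p c z) (at z)"
proof -
  define K where "K = kk a"
  define N where "N = (\<lambda>z. c * (z - a) - p * (1 - cnj a * z))"
  define D where "D = (\<lambda>z. (1 - cnj a * z)\<^sup>2)"
  have dN: "(N has_field_derivative (c + p * cnj a)) (at z)"
    unfolding N_def by (rule derivative_eq_intros refl)+ (simp add: algebra_simps)
  have dD: "(D has_field_derivative (2 * (1 - cnj a * z) * (- cnj a))) (at z)"
    unfolding D_def by (rule derivative_eq_intros refl)+ (simp add: algebra_simps)
  have Dz: "D z \<noteq> 0" using u by (simp add: D_def)
  have eq: "blk a p c = (\<lambda>z. K * (N z / D z))"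
    by (simp add: fun_eq_iff blk_def K_def N_def D_def)
  have "(blk a p c has_field_derivative K * (((c + p * cnj a) * D z - N z * (2 * (1 - cnj a * z) * (- cnj a))) / (D z * D z))) (at z)"
    unfolding eq by (intro DERIV_cmult DERIV_divide dN dD Dz)
  moreover have "K * (((c + p * cnj a) * D z - N z * (2 * (1 - cnj a * z) * (- cnj a))) / (D z * D z)) = blk' a p c z"
    unfolding blk'_def K_def N_def D_def using alg1[OF u] by simp
  ultimately show ?thesis by simp
qed

lemma den_identity: "(cmod (1 - cnj a * z))\<^sup>2 - (cmod (z - a))\<^sup>2 = (1 - (cmod a)\<^sup>2) * (1 - (cmod z)\<^sup>2)"
  unfolding cmod_power2 by (simp add: power2_eq_square algebra_simps)
lemma den_ge: assumes "cmod a \<le> 1" "cmod z \<le> 1" shows "cmod (z - a) \<le> cmod (1 - cnj a * z)"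
proof -
  have h1: "(cmod a)\<^sup>2 \<le> 1" using assms(1) norm_ge_zero[of a] by (metis power_le_one)
  have h2: "(cmod z)\<^sup>2 \<le> 1" using assms(2) norm_ge_zero[of z] by (metis power_le_one)
  have "0 \<le> (1 - (cmod a)\<^sup>2) * (1 - (cmod z)\<^sup>2)"
    using h1 h2 by (intro mult_nonneg_nonneg) linarith+
  then have "(cmod (z - a))\<^sup>2 \<le> (cmod (1 - cnj a * z))\<^sup>2" using den_identity[of a z] by linarith
  then show ?thesis by (rule power2_le_imp_le) simp
qed

lemma den_low: assumes "cmod a \<le> 1" "cmod z \<le> 1"
  shows "1 - cmod a \<le> cmod (1 - cnj a * z)" "1 - cmod z \<le> cmod (1 - cnj a * z)"
proof -
  have "cmod (1 - cnj a * z) \<ge> 1 - cmod a * cmod z"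
    by (metis complex_mod_cnj norm_mult norm_one norm_triangle_ineq2)
  moreover have "cmod a * cmod z \<le> cmod a"
    using assms by (intro mult_right_le_one_le) auto
  moreover have "cmod a * cmod z \<le> cmod z"
    using assms by (intro mult_left_le_one_le) auto
  ultimately show "1 - cmod a \<le> cmod (1 - cnj a * z)" "1 - cmod z \<le> cmod (1 - cnj a * z)" by linarith+
qed

lemma blk_norm_le:
  assumes a: "cmod a < 1" and z: "cmod z \<le> 1"
  shows "cmod (blk a p c z) \<le> (1 - (cmod a)\<^sup>2) * (cmod c + cmod p) / cmod (1 - cnj a * z)"
proof -
  define u where "u = 1 - cnj a * z"
  have upos: "0 < cmod u" using den_low(1)[of a z, OF less_imp_le[OF a] z] a unfolding u_def by linarith
  have K: "0 \<le> 1 - (cmod a)\<^sup>2" using a by (simp add: power_le_one)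
  have N: "cmod (c * (z - a) - p * u) \<le> (cmod c + cmod p) * cmod u"
  proof -
    have "cmod (c * (z - a) - p * u) \<le> cmod c * cmod (z - a) + cmod p * cmod u"
      by (metis norm_mult norm_triangle_ineq4)
    also have "\<dots> \<le> cmod c * cmod u + cmod p * cmod u"
      using den_ge[of a z] a z by (intro add_right_mono mult_left_mono) (auto simp: u_def)
    finally show ?thesis by (simp add: algebra_simps)
  qed
  have "cmod (blk a p c z) = (1 - (cmod a)\<^sup>2) * cmod (c * (z - a) - p * u) / (cmod u)\<^sup>2"
    using a by (simp add: blk_def u_def norm_mult norm_divide norm_power norm_kk)
  also have "\<dots> \<le> (1 - (cmod a)\<^sup>2) * ((cmod c + cmod p) * cmod u) / (cmod u)\<^sup>2"
    using N K by (intro divide_right_mono mult_left_mono) auto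
  also have "\<dots> = (1 - (cmod a)\<^sup>2) * (cmod c + cmod p) / cmod u"
    using upos by (simp add: power2_eq_square field_simps)
  finally show ?thesis by (simp add: u_def)
qed

lemma blk'_norm_le:
  assumes a: "cmod a < 1" and z: "cmod z \<le> 1"
  shows "cmod (blk' a p c z) \<le> 3 * (1 - (cmod a)\<^sup>2) * (cmod c + cmod p) / (cmod (1 - cnj a * z))\<^sup>2"
proof -
  define u where "u = 1 - cnj a * z"
  have upos: "0 < cmod u" using den_low(1)[of a z, OF less_imp_le[OF a] z] a unfolding u_def by linarith
  have K: "0 \<le> 1 - (cmod a)\<^sup>2" using a by (simp add: power_le_one)
  have ca: "cmod (cnj a) \<le> 1" using a by simp
  have N: "cmod (c * (z - a) - p * u) \<le> (cmod c + cmod p) * cmod u"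
  proof -
    have "cmod (c * (z - a) - p * u) \<le> cmod c * cmod (z - a) + cmod p * cmod u"
      by (metis norm_mult norm_triangle_ineq4)
    also have "\<dots> \<le> cmod c * cmod u + cmod p * cmod u"
      using den_ge[of a z] a z by (intro add_right_mono mult_left_mono) (auto simp: u_def)
    finally show ?thesis by (simp add: algebra_simps)
  qed
  have M1: "cmod ((c + p * cnj a) * u) \<le> (cmod c + cmod p) * cmod u"
  proof -
    have "cmod (c + p * cnj a) \<le> cmod c + cmod p * cmod (cnj a)"
      by (metis norm_mult norm_triangle_ineq)
    also have "\<dots> \<le> cmod c + cmod p" using ca by (simp add: mult_left_le)
    finally show ?thesis by (simp add: norm_mult mult_right_mono)
  qed
  have M2: "cmod (2 * cnj a * (c * (z - a) - p * u)) \<le> 2 * ((cmod c + cmod p) * cmod u)"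
  proof -
    have "cmod (2 * cnj a * (c * (z - a) - p * u)) = 2 * cmod (cnj a) * cmod (c * (z - a) - p * u)"
      by (simp add: norm_mult)
    also have "\<dots> \<le> 2 * 1 * ((cmod c + cmod p) * cmod u)"
      using ca N by (intro mult_mono) auto
    finally show ?thesis by simp
  qed
  have M: "cmod ((c + p * cnj a) * u + 2 * cnj a * (c * (z - a) - p * u)) \<le> 3 * ((cmod c + cmod p) * cmod u)"
    using M1 M2 norm_triangle_ineq[of "(c + p * cnj a) * u" "2 * cnj a * (c * (z - a) - p * u)"] by linarith
  have "cmod (blk' a p c z) = (1 - (cmod a)\<^sup>2) * cmod ((c + p * cnj a) * u + 2 * cnj a * (c * (z - a) - p * u)) / (cmod u)^3"
    using a by (simp add: blk'_def u_def norm_mult norm_divide norm_power norm_kk)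
  also have "\<dots> \<le> (1 - (cmod a)\<^sup>2) * (3 * ((cmod c + cmod p) * cmod u)) / (cmod u)^3"
    using M K by (intro divide_right_mono mult_left_mono) auto
  also have "\<dots> = 3 * (1 - (cmod a)\<^sup>2) * (cmod c + cmod p) / (cmod u)\<^sup>2"
    using upos by (simp add: power2_eq_square power3_eq_cube field_simps)
  finally show ?thesis by (simp add: u_def)
qed

lemma sq_lt1: "cmod a < 1 \<Longrightarrow> (cmod a)\<^sup>2 < 1"
proof -
  assume a: "cmod a < 1"
  have "cmod a * cmod a \<le> cmod a" by (rule mult_left_le_one_le) (use a in auto)
  then show ?thesis using a by (simp add: power2_eq_square)
qed

lemma kk_ne: "cmod a < 1 \<Longrightarrow> kk a \<noteq> 0"
proof
  assume a: "cmod a < 1" and "kk a = 0"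
  then have "1 - (cmod a)\<^sup>2 = 0" using norm_kk[of a] by simp
  then show False using sq_lt1[OF a] by simp
qed

lemma blk_at: assumes "cmod a < 1" shows "blk a p c a = - p"
  using kk_ne[OF assms] unfolding blk_def kk_eq by (simp add: power2_eq_square)

lemma blk'_at: assumes "cmod a < 1" shows "kk a * blk' a p c a = c - p * cnj a"
  using alg2[OF kk_ne[OF assms], of c p "cnj a"] unfolding blk'_def kk_eq by simp



fun pp :: "(nat \<Rightarrow> complex) \<Rightarrow> nat \<Rightarrow> complex" where
  "pp a k = (\<Sum>i<k. blk (a i) (pp a i) (of_real (10^i)) (a k))"
declare pp.simps[simp del]

definition Bk :: "(nat \<Rightarrow> complex) \<Rightarrow> nat \<Rightarrow> complex \<Rightarrow> complex" where
  "Bk a k z = blk (a k) (pp a k) (of_real (10^k)) z"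
definition Bk' :: "(nat \<Rightarrow> complex) \<Rightarrow> nat \<Rightarrow> complex \<Rightarrow> complex" where
  "Bk' a k z = blk' (a k) (pp a k) (of_real (10^k)) z"
definition FF :: "(nat \<Rightarrow> complex) \<Rightarrow> complex \<Rightarrow> complex" where
  "FF a z = (\<Sum>k. Bk a k z)"

lemma pp_eq: "pp a k = (\<Sum>i<k. Bk a i (a k))"
  by (simp add: Bk_def pp.simps[of a k])

lemma step_ineq: assumes "x * (16 * 20^n) \<le> (y::real)"
  shows "10^n * x \<le> y * (1/2)^n / 16"
proof -
  have "(20::real)^n = 10^n * 2^n" by (simp flip: power_mult_distrib)
  then have "10^n * x * 2^n * 16 \<le> y" using assms by (simp add: algebra_simps)
  then show ?thesis by (simp add: field_simps power_one_over)
qed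

lemma xlogx: fixes x d :: real assumes "0 < x" "x \<le> d" "d \<le> 1"
  shows "x * ln (exp 1 / x) \<le> d * ln (exp 1 / d)"
proof -
  have d0: "0 < d" using assms(1,2) by (rule less_le_trans)
  have "ln (d / x) \<le> d / x - 1" using assms d0 by (intro ln_le_minus_one) auto
  then have "ln d - ln x \<le> d / x - 1" using assms d0 by (simp add: ln_div)
  then have "x * (ln d - ln x) \<le> x * (d / x - 1)" using assms by (intro mult_left_mono) auto
  then have 1: "x * ln d - x * ln x \<le> d - x" using assms by (simp add: algebra_simps)
  have "ln d \<le> 0" using assms d0 by simp
  then have 2: "(d - x) * ln d \<le> 0" using assms by (intro mult_nonneg_nonpos) auto
  have "x * ln (exp 1 / x) = x - x * ln x" using assms by (simp add: ln_div algebra_simps)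
  moreover have "d * ln (exp 1 / d) = d - d * ln d" using d0 by (simp add: ln_div algebra_simps)
  ultimately show ?thesis using 1 2 by (simp add: algebra_simps)
qed

lemma geo10: "(\<Sum>i<k. (10::real)^i) * 9 = 10^k - 1"
  by (induction k) (auto simp: algebra_simps)

lemma geo_sum_bound:
  fixes f :: "nat \<Rightarrow> complex"
  assumes b: "\<And>n. cmod (f n) \<le> C * (1/2)^n"
  shows "summable (\<lambda>n. cmod (f n))" "cmod (suminf f) \<le> 2 * C"
proof -
  have g: "summable (\<lambda>n. C * (1/2::real)^n)" by (intro summable_mult) simp
  show s: "summable (\<lambda>n. cmod (f n))"
    by (rule summable_comparison_test'[OF g]) (use b in simp)
  have "cmod (suminf f) \<le> (\<Sum>n. cmod (f n))" by (rule summable_norm[OF s])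
  also have "\<dots> \<le> (\<Sum>n. C * (1/2::real)^n)" by (rule suminf_le[OF b s g])
  also have "\<dots> = C * 2" by (simp add: suminf_mult suminf_geometric)
  finally show "cmod (suminf f) \<le> 2 * C" by simp
qed

lemma geo_half: "(\<Sum>i<j. (1/2::real)^(Suc i)) = 1 - (1/2)^j"
  by (induction j) (auto simp: field_simps)

lemma G1:
  fixes K B T xi xj h :: real
  assumes xi: "0 < xi" and "0 < xj" "0 \<le> K" "K \<le> 2 * xj" "0 \<le> B" "B \<le> 12 * T / xi" "0 \<le> T"
    and hb: "160 * (T * xj) \<le> xi * h"
  shows "K * B \<le> h"
proof -
  have "K * B \<le> (2 * xj) * (12 * T / xi)"
    using assms by (intro mult_mono) auto
  also have "\<dots> = (24 * (T * xj)) / xi" by (simp add: field_simps)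
  also have "\<dots> \<le> h"
  proof -
    have "0 \<le> T * xj" using assms by simp
    then have "24 * (T * xj) \<le> xi * h" using hb by linarith
    then show ?thesis using xi by (simp add: pos_divide_le_eq mult.commute)
  qed
  finally show ?thesis .
qed

lemma G2:
  fixes K B S xj h :: real
  assumes xj: "0 < xj" and "0 \<le> K" "K \<le> 2 * xj" "0 \<le> B" "B \<le> 12 * S / xj\<^sup>2" "0 \<le> S"
    and hb: "16 * S \<le> xj * h"
  shows "K * B \<le> (3/2) * h"
proof -
  have "K * B \<le> (2 * xj) * (12 * S / xj\<^sup>2)"
    using assms by (intro mult_mono) auto
  also have "\<dots> = (24 * S) / xj" using xj by (simp add: field_simps power2_eq_square)
  also have "\<dots> \<le> (3/2) * h"
  proof -
    have "24 * S \<le> xj * ((3/2) * h)" using hb by (simp add: algebra_simps)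
    then show ?thesis using xj by (simp add: pos_divide_le_eq mult.commute)
  qed
  finally show ?thesis .
qed

context
  fixes a :: "nat \<Rightarrow> complex" and x :: "nat \<Rightarrow> real"
  assumes ax: "\<And>k. cmod (a k) = 1 - x k"
    and xpos: "\<And>k. 0 < x k"
    and xhalf: "\<And>k. x k \<le> 1/2"
    and xstep: "\<And>k. x (Suc k) * (16 * 20 ^ Suc k) \<le> x k"
    and xlog: "\<And>k. 20 ^ k \<le> ln (exp 1 / x k)"
begin

lemma a_lt1: "cmod (a k) < 1" using ax[of k] xpos[of k] by linarith
lemma a_le1: "cmod (a k) \<le> 1" using a_lt1 less_imp_le by blast

lemma x_dec: "x (Suc k) \<le> x k"
proof -
  have "x (Suc k) * 1 \<le> x (Suc k) * (16 * 20 ^ Suc k)"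
  proof (rule mult_left_mono)
    have "(1::real) \<le> 20 ^ Suc k" by (rule one_le_power) simp
    then show "(1::real) \<le> 16 * 20 ^ Suc k" by simp
  qed (use xpos[of "Suc k"] in auto)
  then show ?thesis using xstep[of k] by simp
qed

lemma x_anti: "k \<le> j \<Longrightarrow> x j \<le> x k"
proof (induction j rule: dec_induct)
  case base then show ?case by simp
next
  case (step n) then show ?case using x_dec[of n] by linarith
qed

lemma kk_le: "1 - (cmod (a k))\<^sup>2 \<le> 2 * x k"
proof -
  have "1 - (cmod (a k))\<^sup>2 = 2 * x k - (x k)\<^sup>2" unfolding ax by (simp add: power2_eq_square algebra_simps)
  then show ?thesis by simp
qed

lemma blk_le:
  assumes z: "cmod z \<le> 1"
  shows "cmod (blk (a i) p c z) \<le> 2 * x i * (cmod c + cmod p) / cmod (1 - cnj (a i) * z)"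
proof -
  have u: "0 < cmod (1 - cnj (a i) * z)"
    using den_low(1)[OF a_le1 z, of i] ax[of i] xpos[of i] by linarith
  have "cmod (blk (a i) p c z) \<le> (1 - (cmod (a i))\<^sup>2) * (cmod c + cmod p) / cmod (1 - cnj (a i) * z)"
    by (rule blk_norm_le[OF a_lt1 z])
  also have "\<dots> \<le> 2 * x i * (cmod c + cmod p) / cmod (1 - cnj (a i) * z)"
    using u kk_le[of i] by (intro divide_right_mono mult_right_mono) auto
  finally show ?thesis .
qed

lemma blk_le2:
  assumes z: "cmod z \<le> 1"
  shows "cmod (blk (a i) p c z) \<le> 2 * (cmod c + cmod p)"
proof -
  have u: "x i \<le> cmod (1 - cnj (a i) * z)"
    using den_low(1)[OF a_le1 z, of i] ax[of i] by linarith
  have "cmod (blk (a i) p c z) \<le> 2 * x i * (cmod c + cmod p) / cmod (1 - cnj (a i) * z)"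
    by (rule blk_le[OF z])
  also have "\<dots> \<le> 2 * x i * (cmod c + cmod p) / x i"
    using u xpos[of i] by (intro divide_left_mono) (auto intro!: mult_pos_pos)
  also have "\<dots> = 2 * (cmod c + cmod p)" using xpos[of i] by simp
  finally show ?thesis .
qed

lemma pp_bound: "cmod (pp a k) \<le> 10^k / 3"
proof (induction k rule: less_induct)
  case (less k)
  have "cmod (pp a k) \<le> (\<Sum>i<k. cmod (blk (a i) (pp a i) (of_real (10^i)) (a k)))"
    unfolding pp.simps[of a k] by (rule norm_sum)
  also have "\<dots> \<le> (\<Sum>i<k. 2 * (10^i + 10^i / 3))"
  proof (rule sum_mono)
    fix i assume i: "i \<in> {..<k}"
    have "cmod (blk (a i) (pp a i) (of_real (10^i)) (a k)) \<le> 2 * (cmod (of_real (10^i) :: complex) + cmod (pp a i))"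
      by (rule blk_le2[OF a_le1])
    also have "\<dots> \<le> 2 * (10^i + 10^i / 3)" using less.IH[of i] i by (simp add: norm_power)
    finally show "cmod (blk (a i) (pp a i) (of_real (10^i)) (a k)) \<le> 2 * (10^i + 10^i / 3)" .
  qed
  also have "\<dots> = (8/3) * (\<Sum>i<k. (10::real)^i)" by (simp add: sum_distrib_left)
  also have "\<dots> = (8/27) * (10^k - 1)" using geo10[of k] by (simp add: field_simps)
  also have "\<dots> \<le> 10^k / 3"
  proof -
    have "(0::real) \<le> 10^k" by simp
    then show ?thesis by (simp add: field_simps)
  qed
  finally show ?case .
qed

lemma W_le: "cmod (of_real (10^k) :: complex) + cmod (pp a k) \<le> 2 * 10^k"
proof -
  have "cmod (of_real (10^k)::complex) = 10^k" by (simp add: norm_power)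
  have p: "cmod (pp a k) \<le> 10^k / 3" by (rule pp_bound)
  have z: "(0::real) \<le> 10^k" by simp
  have "cmod (of_real (10^k)::complex) + cmod (pp a k) \<le> 10^k + 10^k / 3"
    unfolding \<open>cmod (of_real (10^k)::complex) = 10^k\<close> using p by (rule add_left_mono)
  also have "\<dots> \<le> 2 * 10^k" using z by simp
  finally show ?thesis .
qed

lemma Bk_le1:
  assumes z: "cmod z < 1"
  shows "cmod (Bk a k z) \<le> 4 * 10^k * x k / max (x k) (1 - cmod z)"
proof -
  have u: "max (x k) (1 - cmod z) \<le> cmod (1 - cnj (a k) * z)"
    using den_low[OF a_le1 less_imp_le[OF z], of k] ax[of k] by simp
  have m: "0 < max (x k) (1 - cmod z)" using xpos[of k] by (simp add: max_def)
  have "cmod (Bk a k z) \<le> 2 * x k * (cmod (of_real (10^k) :: complex) + cmod (pp a k)) / cmod (1 - cnj (a k) * z)"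
    unfolding Bk_def by (rule blk_le) (use z in simp)
  also have "\<dots> \<le> 2 * x k * (2 * 10^k) / cmod (1 - cnj (a k) * z)"
    using W_le[of k] xpos[of k] u m by (intro divide_right_mono mult_left_mono) auto
  also have "\<dots> \<le> 2 * x k * (2 * 10^k) / max (x k) (1 - cmod z)"
    using u m xpos[of k] by (intro divide_left_mono) (auto intro!: mult_pos_pos)
  finally show ?thesis by (simp add: algebra_simps)
qed

lemma ten_le: "10^k \<le> (1/2)^k * ln (exp 1 / x k)"
proof -
  have "(20::real)^k = 10^k * 2^k" by (simp flip: power_mult_distrib)
  then have "10^k * 2^k \<le> ln (exp 1 / x k)" using xlog[of k] by simp
  then show ?thesis by (simp add: field_simps power_one_over)
qed

lemma Bk_le2:
  assumes z: "cmod z < 1"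
  shows "cmod (Bk a k z) \<le> 4 * (1/2)^k * ln (exp 1 / (1 - cmod z))"
proof (cases "1 - cmod z \<le> x k")
  case True
  have d: "0 < 1 - cmod z" using z by simp
  have "cmod (Bk a k z) \<le> 4 * 10^k * x k / max (x k) (1 - cmod z)" by (rule Bk_le1[OF z])
  also have "\<dots> = 4 * 10^k" using True xpos[of k] by (simp add: max_def)
  also have "\<dots> \<le> 4 * ((1/2)^k * ln (exp 1 / x k))" using ten_le[of k] by simp
  also have "\<dots> \<le> 4 * ((1/2)^k * ln (exp 1 / (1 - cmod z)))"
    using True d xpos[of k] by (intro mult_left_mono ln_mono divide_left_mono) auto
  finally show ?thesis by simp
next
  case False
  have d: "0 < 1 - cmod z" using z by simp
  have "cmod (Bk a k z) \<le> 4 * 10^k * x k / max (x k) (1 - cmod z)" by (rule Bk_le1[OF z])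
  also have "\<dots> = 4 * 10^k * x k / (1 - cmod z)" using False by (simp add: max_def)
  also have "\<dots> \<le> 4 * ((1/2)^k * ln (exp 1 / x k)) * x k / (1 - cmod z)"
    using ten_le[of k] xpos[of k] d by (intro divide_right_mono mult_right_mono) auto
  also have "\<dots> = 4 * (1/2)^k * (x k * ln (exp 1 / x k)) / (1 - cmod z)" by simp
  also have "\<dots> \<le> 4 * (1/2)^k * ((1 - cmod z) * ln (exp 1 / (1 - cmod z))) / (1 - cmod z)"
    using xlogx[of "x k" "1 - cmod z"] False xpos[of k] d by (intro divide_right_mono mult_left_mono) auto
  also have "\<dots> = 4 * (1/2)^k * ln (exp 1 / (1 - cmod z))" using d by simp
  finally show ?thesis .
qed


lemma Bk_le3:
  assumes z: "cmod z < 1"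
  shows "cmod (Bk a k z) \<le> (4 * ln (exp 1 / (1 - cmod z))) * (1/2)^k"
  using Bk_le2[OF z, of k] by (simp add: algebra_simps)

lemma Bk'_le:
  assumes z: "cmod z \<le> 1"
  shows "cmod (Bk' a k z) \<le> 12 * 10^k * x k / (cmod (1 - cnj (a k) * z))\<^sup>2"
proof -
  have u: "0 < cmod (1 - cnj (a k) * z)"
    using den_low(1)[OF a_le1 z, of k] ax[of k] xpos[of k] by linarith
  have "cmod (Bk' a k z) \<le> 3 * (1 - (cmod (a k))\<^sup>2) * (cmod (of_real (10^k) :: complex) + cmod (pp a k)) / (cmod (1 - cnj (a k) * z))\<^sup>2"
    unfolding Bk'_def by (rule blk'_norm_le[OF a_lt1 z])
  also have "\<dots> \<le> 3 * (2 * x k) * (2 * 10^k) / (cmod (1 - cnj (a k) * z))\<^sup>2"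
    using u kk_le[of k] W_le[of k] xpos[of k]
    by (intro divide_right_mono mult_mono mult_left_mono) auto
  finally show ?thesis by (simp add: algebra_simps)
qed

lemma FF_bound:
  assumes z: "cmod z < 1"
  shows "cmod (FF a z) \<le> 8 * ln (exp 1 / (1 - cmod z))"
  using geo_sum_bound(2)[of "\<lambda>k. Bk a k z", OF Bk_le3[OF z]] unfolding FF_def by simp

lemma FF_deriv:
  assumes z: "cmod z < 1"
  shows "(FF a has_field_derivative (\<Sum>k. Bk' a k z)) (at z)" "summable (\<lambda>k. Bk' a k z)"
proof -
  have hfd: "(Bk a n has_field_derivative Bk' a n y) (at y)" if "y \<in> ball 0 1" for n y
  proof -
    have y: "cmod y \<le> 1" using that by simp
    have "0 < cmod (1 - cnj (a n) * y)"
      using den_low(1)[OF a_le1 y, of n] ax[of n] xpos[of n] by linarith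
    then have "1 - cnj (a n) * y \<noteq> 0" by auto
    from blk_deriv[OF this] show ?thesis
      unfolding Bk_def[abs_def] Bk'_def by simp
  qed
  have to_g: "\<exists>d h. 0 < d \<and> summable h \<and> (\<forall>\<^sub>F n in sequentially. \<forall>y\<in>ball w d \<inter> ball 0 1. norm (Bk a n y) \<le> h n)"
    if w: "w \<in> ball 0 1" for w
  proof (intro exI conjI)
    define d where "d = (1 - cmod w) / 2"
    have w1: "cmod w < 1" using w by simp
    have d1: "0 < d" unfolding d_def using w1 by simp
    have "1 - cmod w \<le> 2" using norm_ge_zero[of w] by linarith
    then have d2: "d \<le> 1" unfolding d_def by simp
    note d = d1 d2
    show "0 < d" by (rule d(1))
    show "summable (\<lambda>n. (4 * ln (exp 1 / d)) * (1/2::real)^n)" by (intro summable_mult) simp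
    show "\<forall>\<^sub>F n in sequentially. \<forall>y\<in>ball w d \<inter> ball 0 1. norm (Bk a n y) \<le> (4 * ln (exp 1 / d)) * (1/2)^n"
    proof (intro always_eventually allI ballI)
      fix n y assume y: "y \<in> ball w d \<inter> ball 0 1"
      have y1: "cmod y < 1" using y by simp
      have "cmod y \<le> cmod w + cmod (y - w)" by (metis add.commute diff_add_cancel norm_triangle_ineq)
      moreover have "cmod (y - w) < d" using y by (simp add: dist_norm norm_minus_commute)
      moreover have "2 * d = 1 - cmod w" by (simp add: d_def)
      ultimately have dy: "d \<le> 1 - cmod y" by linarith
      have "ln (exp 1 / (1 - cmod y)) \<le> ln (exp 1 / d)"
        using dy d by (intro ln_mono divide_left_mono) auto
      then have "(4 * ln (exp 1 / (1 - cmod y))) * (1/2::real)^n \<le> (4 * ln (exp 1 / d)) * (1/2)^n"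
        by (intro mult_right_mono) auto
      then show "norm (Bk a n y) \<le> (4 * ln (exp 1 / d)) * (1/2)^n"
        using Bk_le3[OF y1, of n] by linarith
    qed
  qed
  obtain g g' where gg: "\<forall>y\<in>ball 0 1. ((\<lambda>n. Bk a n y) sums g y) \<and> ((\<lambda>n. Bk' a n y) sums g' y) \<and> (g has_field_derivative g' y) (at y)"
    using series_and_derivative_comparison_local[OF open_ball hfd to_g] by blast
  have zb: "z \<in> ball 0 1" using z by simp
  have eq: "g y = FF a y" if "y \<in> ball 0 1" for y
    using gg that unfolding FF_def by (metis sums_unique)
  have "(g has_field_derivative g' z) (at z)" using gg zb by blast
  then have "(FF a has_field_derivative g' z) (at z)"
    by (rule has_field_derivative_transform_within_open[OF _ open_ball zb eq])
  moreover have "g' z = (\<Sum>k. Bk' a k z)" using gg zb by (metis sums_unique)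
  ultimately show "(FF a has_field_derivative (\<Sum>k. Bk' a k z)) (at z)" by simp
  show "summable (\<lambda>k. Bk' a k z)" using gg zb summable_def by blast
qed

lemma FF_holo: "FF a holomorphic_on ball 0 1"
  unfolding holomorphic_on_open[OF open_ball] by (meson FF_deriv(1) mem_ball_0)

lemma tail_ineq:
  assumes "j < k"
  shows "10^k * x k \<le> x j * (1/2)^k / 16"
proof -
  define m where "m = k - 1"
  have k: "k = Suc m" using assms by (simp add: m_def)
  have jm: "j \<le> m" using assms by (simp add: m_def)
  have "10^k * x k \<le> x m * (1/2)^k / 16"
    using step_ineq[OF xstep[of m]] k by simp
  also have "\<dots> \<le> x j * (1/2)^k / 16"
    using x_anti[OF jm] by (intro divide_right_mono mult_right_mono) auto
  finally show ?thesis .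
qed

lemma Bk_tail_le:
  assumes "j < k"
  shows "cmod (Bk a k (a j)) \<le> (1/4) * (1/2)^k"
proof -
  have "cmod (Bk a k (a j)) \<le> 4 * 10^k * x k / max (x k) (1 - cmod (a j))"
    by (rule Bk_le1[OF a_lt1])
  also have "\<dots> \<le> 4 * 10^k * x k / x j"
    using xpos[of j] xpos[of k] ax[of j] by (intro divide_left_mono) auto
  also have "\<dots> \<le> 4 * (x j * (1/2)^k / 16) / x j"
    using tail_ineq[OF assms] xpos[of j] by (intro divide_right_mono) auto
  also have "\<dots> = (1/4) * (1/2)^k" using xpos[of j] by simp
  finally show ?thesis .
qed

lemma FF_at:
  shows "cmod (FF a (a j)) \<le> 1/2"
proof -
  have s: "summable (\<lambda>k. Bk a k (a j))"
    by (rule summable_norm_cancel, rule geo_sum_bound(1)[OF Bk_le3[OF a_lt1]])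
  have "FF a (a j) = (\<Sum>n. Bk a (n + Suc j) (a j)) + (\<Sum>i<Suc j. Bk a i (a j))"
    unfolding FF_def by (rule suminf_split_initial_segment[OF s])
  also have "(\<Sum>i<Suc j. Bk a i (a j)) = 0"
  proof -
    have 1: "(\<Sum>i<Suc j. Bk a i (a j)) = pp a j + Bk a j (a j)"
      unfolding sum.lessThan_Suc pp_eq[of a j] by simp
    have 2: "Bk a j (a j) = - pp a j" unfolding Bk_def by (rule blk_at[OF a_lt1])
    show ?thesis unfolding 1 2 by simp
  qed
  finally have e: "FF a (a j) = (\<Sum>n. Bk a (n + Suc j) (a j))" by simp
  have b: "cmod (Bk a (n + Suc j) (a j)) \<le> (1/4) * (1/2)^n" for n
  proof -
    have "cmod (Bk a (n + Suc j) (a j)) \<le> (1/4) * (1/2)^(n + Suc j)" by (rule Bk_tail_le) simp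
    also have "\<dots> \<le> (1/4) * (1/2)^n"
    proof (rule mult_left_mono)
      show "(1/2::real)^(n + Suc j) \<le> (1/2)^n" by (rule power_decreasing) auto
    qed simp
    finally show ?thesis .
  qed
  show ?thesis unfolding e using geo_sum_bound(2)[of "\<lambda>n. Bk a (n + Suc j) (a j)", OF b] by simp
qed


lemma kk_aj: "cmod (kk (a j)) \<le> 2 * x j"
  using norm_kk[OF a_le1, of j] kk_le[of j] by simp

lemma Bk'_before:
  assumes ij: "i < j"
  shows "cmod (kk (a j)) * cmod (Bk' a i (a j)) \<le> (1/2)^(Suc i)"
proof (rule G1[where xi="x i" and xj="x j" and T="10^i"])
  have u: "x i \<le> cmod (1 - cnj (a i) * a j)"
    using den_low(1)[OF a_le1[of i] a_le1[of j]] ax[of i] by linarith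
  have "cmod (Bk' a i (a j)) \<le> 12 * 10^i * x i / (cmod (1 - cnj (a i) * a j))\<^sup>2"
    by (rule Bk'_le[OF a_le1])
  also have "\<dots> \<le> 12 * 10^i * x i / (x i)\<^sup>2"
    using u xpos[of i] by (intro divide_left_mono power_mono mult_pos_pos) auto
  also have "\<dots> = 12 * 10^i / x i" using xpos[of i] by (simp add: power2_eq_square)
  finally show "cmod (Bk' a i (a j)) \<le> 12 * 10^i / x i" .
  have t: "10^(Suc i) * x (Suc i) \<le> x i * (1/2)^(Suc i) / 16" by (rule tail_ineq) simp
  have xj: "x j \<le> x (Suc i)" using ij by (intro x_anti) simp
  have "160 * (10^i * x j) = 16 * (10^(Suc i) * x j)" by simp
  also have "\<dots> \<le> 16 * (10^(Suc i) * x (Suc i))"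
    using xj by (intro mult_left_mono) auto
  also have "\<dots> \<le> x i * (1/2)^(Suc i)" using t by simp
  finally show "160 * (10^i * x j) \<le> x i * (1/2)^(Suc i)" .
qed (use xpos kk_aj in auto)

lemma Bk'_after:
  assumes jk: "j < k"
  shows "cmod (kk (a j)) * cmod (Bk' a k (a j)) \<le> (3/2) * (1/2)^k"
proof (rule G2[where xj="x j" and S="10^k * x k"])
  have u: "x j \<le> cmod (1 - cnj (a k) * a j)"
    using den_low(2)[OF a_le1[of k] a_le1[of j]] ax[of j] by linarith
  have "cmod (Bk' a k (a j)) \<le> 12 * 10^k * x k / (cmod (1 - cnj (a k) * a j))\<^sup>2"
    by (rule Bk'_le[OF a_le1])
  also have "\<dots> \<le> 12 * 10^k * x k / (x j)\<^sup>2"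
    using u xpos[of j] xpos[of k] by (intro divide_left_mono power_mono mult_pos_pos) auto
  finally show "cmod (Bk' a k (a j)) \<le> 12 * (10^k * x k) / (x j)\<^sup>2" by (simp add: mult.assoc)
  show "16 * (10^k * x k) \<le> x j * (1/2)^k" using tail_ineq[OF jk] by simp
qed (use xpos kk_aj less_imp_le[OF xpos] in auto)

lemma FF'_at:
  shows "2 * 10^j - 12 \<le> 3 * cmod (kk (a j) * (\<Sum>k. Bk' a k (a j)))"
proof -
  define K where "K = kk (a j)"
  have s: "summable (\<lambda>k. Bk' a k (a j))" by (rule FF_deriv(2)[OF a_lt1])
  have split: "(\<Sum>k. Bk' a k (a j)) = (\<Sum>n. Bk' a (n + Suc j) (a j)) + (\<Sum>i<j. Bk' a i (a j)) + Bk' a j (a j)"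
    using suminf_split_initial_segment[OF s, of "Suc j"] by simp
  have st: "summable (\<lambda>n. Bk' a (n + Suc j) (a j))" by (rule summable_ignore_initial_segment[OF s])
  have main: "2 * 10^j \<le> 3 * cmod (K * Bk' a j (a j))"
  proof -
    have e: "K * Bk' a j (a j) = of_real (10^j) - pp a j * cnj (a j)"
      unfolding K_def Bk'_def by (rule blk'_at[OF a_lt1])
    have "cmod (pp a j * cnj (a j)) = cmod (pp a j) * cmod (a j)" by (simp add: norm_mult)
    also have "\<dots> \<le> cmod (pp a j)" by (rule mult_right_le_one_le) (use a_le1 in auto)
    finally have p: "3 * cmod (pp a j * cnj (a j)) \<le> 10^j" using pp_bound[of j] by simp
    have n: "cmod (of_real (10^j) :: complex) = 10^j" by (simp add: norm_power)
    have "cmod (of_real (10^j) :: complex) - cmod (pp a j * cnj (a j)) \<le> cmod (K * Bk' a j (a j))"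
      unfolding e by (rule norm_triangle_ineq2)
    then show ?thesis using p n by linarith
  qed
  have fin: "cmod (K * (\<Sum>i<j. Bk' a i (a j))) \<le> 1"
  proof -
    have "cmod (K * (\<Sum>i<j. Bk' a i (a j))) \<le> cmod K * (\<Sum>i<j. cmod (Bk' a i (a j)))"
      by (simp add: norm_mult mult_left_mono norm_sum)
    also have "\<dots> = (\<Sum>i<j. cmod K * cmod (Bk' a i (a j)))" by (simp add: sum_distrib_left)
    also have "\<dots> \<le> (\<Sum>i<j. (1/2::real)^(Suc i))"
      by (rule sum_mono) (use Bk'_before K_def in auto)
    also have "\<dots> \<le> 1" unfolding geo_half by simp
    finally show ?thesis .
  qed
  have tl: "cmod (K * (\<Sum>n. Bk' a (n + Suc j) (a j))) \<le> 3"
  proof -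
    have b: "cmod (K * Bk' a (n + Suc j) (a j)) \<le> (3/2) * (1/2)^n" for n
    proof -
      have "cmod (K * Bk' a (n + Suc j) (a j)) \<le> (3/2) * (1/2)^(n + Suc j)"
        unfolding norm_mult K_def by (rule Bk'_after) simp
      also have "\<dots> \<le> (3/2) * (1/2)^n"
      proof (rule mult_left_mono)
        show "(1/2::real)^(n + Suc j) \<le> (1/2)^n" by (rule power_decreasing) auto
      qed simp
      finally show ?thesis .
    qed
    have "(\<Sum>n. K * Bk' a (n + Suc j) (a j)) = K * (\<Sum>n. Bk' a (n + Suc j) (a j))"
      by (rule suminf_mult[OF st])
    then show ?thesis using geo_sum_bound(2)[of "\<lambda>n. K * Bk' a (n + Suc j) (a j)", OF b] by simp
  qed
  have "K * (\<Sum>k. Bk' a k (a j)) = K * Bk' a j (a j) + (K * (\<Sum>i<j. Bk' a i (a j)) + K * (\<Sum>n. Bk' a (n + Suc j) (a j)))"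
    unfolding split by (simp add: algebra_simps)
  then have "cmod (K * Bk' a j (a j)) \<le> cmod (K * (\<Sum>k. Bk' a k (a j))) + cmod (K * (\<Sum>i<j. Bk' a i (a j)) + K * (\<Sum>n. Bk' a (n + Suc j) (a j)))"
    using norm_triangle_ineq4[of "K * Bk' a j (a j) + (K * (\<Sum>i<j. Bk' a i (a j)) + K * (\<Sum>n. Bk' a (n + Suc j) (a j)))" "K * (\<Sum>i<j. Bk' a i (a j)) + K * (\<Sum>n. Bk' a (n + Suc j) (a j))"] by simp
  moreover have "cmod (K * (\<Sum>i<j. Bk' a i (a j)) + K * (\<Sum>n. Bk' a (n + Suc j) (a j))) \<le> cmod (K * (\<Sum>i<j. Bk' a i (a j))) + cmod (K * (\<Sum>n. Bk' a (n + Suc j) (a j)))"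
    by (rule norm_triangle_ineq)
  ultimately show ?thesis using main fin tl unfolding K_def by linarith
qed

end


lemma ln_ge1: assumes "cmod (z::complex) < 1" shows "1 \<le> ln (exp 1 / (1 - cmod z))"
proof -
  have d: "0 < 1 - cmod z" "1 - cmod z \<le> 1" using assms by auto
  have "exp 1 * (1 - cmod z) \<le> exp 1 * 1" using d by (intro mult_left_mono) auto
  then have "exp 1 \<le> exp 1 / (1 - cmod z)" using d by (simp add: le_divide_eq)
  then have "ln (exp 1) \<le> ln (exp 1 / (1 - cmod z))" using d by (subst ln_le_cancel_iff) auto
  then show ?thesis by simp
qed

lemma Hlog_const: "(\<lambda>z. k) \<in> H_log_infty"
  unfolding H_log_infty_def
proof (intro CollectI conjI exI ballI)
  show "(\<lambda>z. k) holomorphic_on ball 0 1" by simp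
  fix z :: complex assume "z \<in> ball 0 1"
  then have L: "1 \<le> ln (exp 1 / (1 - cmod z))" by (intro ln_ge1) simp
  have "cmod k * 1 \<le> cmod k * ln (exp 1 / (1 - cmod z))" using L by (intro mult_left_mono) auto
  then show "cmod k / ln (exp 1 / (1 - cmod z)) \<le> cmod k" using L by (simp add: pos_divide_le_eq)
qed

lemma maxmod:
  assumes hw: "w holomorphic_on ball 0 1" and r: "cmod z0 < r" "r < 1"
  shows "\<exists>b. cmod b = r \<and> cmod (w z0) \<le> cmod (w b)"
proof -
  have sub: "cball 0 r \<subseteq> ball 0 1" using r by auto
  have cont: "continuous_on (cball 0 r) w"
    using hw sub holomorphic_on_imp_continuous_on holomorphic_on_subset by blast
  have "continuous_on (sphere 0 r) (\<lambda>z. cmod (w z))"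
    by (intro continuous_on_norm continuous_on_subset[OF cont]) auto
  moreover have "sphere (0::complex) r \<noteq> {}"
  proof -
    have "0 \<le> r" using r(1) norm_ge_zero[of z0] by linarith
    then show ?thesis by simp
  qed
  ultimately obtain b where b: "b \<in> sphere 0 r" "\<forall>y\<in>sphere 0 r. cmod (w y) \<le> cmod (w b)"
    using continuous_attains_sup[of "sphere 0 r" "\<lambda>z. cmod (w z)"] by auto
  have "cmod (w z0) \<le> cmod (w b)"
  proof (rule maximum_modulus_frontier[of w "cball 0 r"])
    have "ball 0 r \<subseteq> ball (0::complex) 1" using sub ball_subset_cball by blast
    then show "w holomorphic_on interior (cball 0 r)"
      using holomorphic_on_subset[OF hw] by simp
    show "continuous_on (closure (cball 0 r)) w" using cont by simp
  qed (use b r in auto)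
  then show ?thesis using b by auto
qed

fun xs :: "real \<Rightarrow> nat \<Rightarrow> real" where
  "xs r 0 = r"
| "xs r (Suc k) = min (xs r k / (16 * 20 ^ Suc k)) (exp (1 - 20 ^ Suc k))"

lemma xs_pos: "0 < r \<Longrightarrow> 0 < xs r k"
  by (induction k) auto

lemma xs_step: assumes "0 < r" shows "xs r (Suc k) * (16 * 20 ^ Suc k) \<le> xs r k"
proof -
  have D: "(0::real) < 16 * 20 ^ Suc k" by simp
  have "xs r (Suc k) \<le> xs r k / (16 * 20 ^ Suc k)" by (simp only: xs.simps min.cobounded1)
  from this pos_le_divide_eq[OF D] show ?thesis by blast
qed

lemma xs_le: assumes "0 < r" shows "xs r k \<le> r"
proof (induction k)
  case 0 then show ?case by simp
next
  case (Suc k)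
  have "xs r (Suc k) * 1 \<le> xs r (Suc k) * (16 * 20 ^ Suc k)"
  proof (rule mult_left_mono)
    have "(1::real) \<le> 20 ^ Suc k" by (rule one_le_power) simp
    then show "(1::real) \<le> 16 * 20 ^ Suc k" by simp
  qed (use xs_pos[OF assms, of "Suc k"] in auto)
  then show ?case using xs_step[OF assms, of k] Suc by simp
qed

lemma xs_log: assumes "0 < r" "r \<le> 1" shows "20 ^ k \<le> ln (exp 1 / xs r k)"
proof (cases k)
  case 0
  have "ln r \<le> 0" using assms by simp
  then show ?thesis using 0 assms by (simp add: ln_div)
next
  case (Suc m)
  have p: "0 < xs r k" by (rule xs_pos[OF assms(1)])
  have "xs r k \<le> exp (1 - 20 ^ k)" using Suc by simp
  then have "ln (xs r k) \<le> ln (exp (1 - 20 ^ k))" using p by (subst ln_le_cancel_iff) auto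
  then have "ln (xs r k) \<le> 1 - 20 ^ k" by simp
  then show ?thesis using p by (simp add: ln_div)
qed

lemma backward:
  assumes wB: "w \<in> Bloch" and c: "\<forall>z. \<phi> z = c"
  shows "\<forall>f\<in>H_log_infty. weighted_superposition \<phi> w f \<in> Bloch"
proof
  fix f assume "f \<in> H_log_infty"
  have e: "weighted_superposition \<phi> w f = (\<lambda>z. w z * c)"
    using c by (simp add: weighted_superposition_def)
  obtain C where hw: "w holomorphic_on ball 0 1" and C: "\<forall>z\<in>ball 0 1. (1 - (norm z)\<^sup>2) * norm (deriv w z) \<le> C"
    using wB unfolding Bloch_def by blast
  show "weighted_superposition \<phi> w f \<in> Bloch"
    unfolding e Bloch_def
  proof (intro CollectI conjI exI ballI)
    show "(\<lambda>z. w z * c) holomorphic_on ball 0 1" using hw by (intro holomorphic_intros)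
    fix z :: complex assume z: "z \<in> ball 0 1"
    have "w field_differentiable at z"
      using hw z holomorphic_on_imp_differentiable_at by blast
    then have d: "deriv (\<lambda>z. w z * c) z = deriv w z * c" by (rule deriv_cmult_right)
    have "(1 - (norm z)\<^sup>2) * norm (deriv (\<lambda>z. w z * c) z) = ((1 - (norm z)\<^sup>2) * norm (deriv w z)) * cmod c"
      unfolding d by (simp add: norm_mult)
    also have "\<dots> \<le> C * cmod c" using C z by (intro mult_right_mono) auto
    finally show "(1 - (norm z)\<^sup>2) * norm (deriv (\<lambda>z. w z * c) z) \<le> C * cmod c" .
  qed
qed

lemma w_bloch:
  assumes hw: "w holomorphic_on ball 0 1" and z1: "\<phi> z1 \<noteq> 0"
    and H: "\<forall>f\<in>H_log_infty. weighted_superposition \<phi> w f \<in> Bloch"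
  shows "w \<in> Bloch"
proof -
  have "weighted_superposition \<phi> w (\<lambda>z. z1) \<in> Bloch" using H Hlog_const by blast
  then obtain C where C: "\<forall>z\<in>ball 0 1. (1 - (norm z)\<^sup>2) * norm (deriv (\<lambda>z. w z * \<phi> z1) z) \<le> C"
    unfolding Bloch_def weighted_superposition_def by blast
  show ?thesis unfolding Bloch_def
  proof (intro CollectI conjI exI ballI)
    show "w holomorphic_on ball 0 1" by (rule hw)
    fix z :: complex assume z: "z \<in> ball 0 1"
    have "w field_differentiable at z"
      using hw z holomorphic_on_imp_differentiable_at by blast
    then have d: "deriv (\<lambda>z. w z * \<phi> z1) z = deriv w z * \<phi> z1" by (rule deriv_cmult_right)
    have p: "0 < cmod (\<phi> z1)" using z1 by simp
    have "(1 - (norm z)\<^sup>2) * norm (deriv (\<lambda>z. w z * \<phi> z1) z) \<le> C" using C z by blast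
    then have "((1 - (norm z)\<^sup>2) * norm (deriv w z)) * cmod (\<phi> z1) \<le> C"
      unfolding d by (simp add: norm_mult mult.assoc)
    then show "(1 - (norm z)\<^sup>2) * norm (deriv w z) \<le> C / cmod (\<phi> z1)"
      using p by (simp add: pos_le_divide_eq)
  qed
qed


lemma phi_const:
  assumes hw: "w holomorphic_on ball 0 1" and z0: "z0 \<in> ball 0 1" "w z0 \<noteq> 0"
    and hphi: "\<phi> holomorphic_on UNIV" and wB: "w \<in> Bloch"
    and H: "\<forall>f\<in>H_log_infty. weighted_superposition \<phi> w f \<in> Bloch"
  shows "\<exists>c. \<forall>z. \<phi> z = c"
proof (rule ccontr)
  assume nc: "\<not> (\<exists>c. \<forall>z. \<phi> z = c)"
  have "\<exists>c0. deriv \<phi> c0 \<noteq> 0"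
  proof (rule ccontr)
    assume "\<not> (\<exists>c0. deriv \<phi> c0 \<noteq> 0)"
    then have z: "\<And>z. deriv \<phi> z = 0" by auto
    have "\<And>z. z \<in> UNIV \<Longrightarrow> (\<phi> has_field_derivative 0) (at z within UNIV)"
      using holomorphic_derivI[OF hphi open_UNIV] z by metis
    then obtain c where "\<forall>z\<in>UNIV. \<phi> z = c"
      using has_field_derivative_zero_constant[OF convex_UNIV] by blast
    then show False using nc by auto
  qed
  then obtain c0 where c0: "deriv \<phi> c0 \<noteq> 0" by blast
  define m where "m = cmod (deriv \<phi> c0) / 2"
  have m0: "0 < m" using c0 by (simp add: m_def)
  have m2: "2 * m = cmod (deriv \<phi> c0)" by (simp add: m_def)
  have cd: "continuous_on UNIV (deriv \<phi>)"
    using holomorphic_deriv[OF hphi open_UNIV] holomorphic_on_imp_continuous_on by blast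
  then have "\<forall>x\<in>UNIV. \<forall>e>0. \<exists>d>0. \<forall>x'\<in>UNIV. dist x' x < d \<longrightarrow> dist (deriv \<phi> x') (deriv \<phi> x) < e"
    by (simp only: continuous_on_iff)
  then obtain d where d0: "0 < d" and d: "\<And>\<xi>. dist \<xi> c0 < d \<Longrightarrow> dist (deriv \<phi> \<xi>) (deriv \<phi> c0) < m"
    using m0 by blast
  define \<epsilon> where "\<epsilon> = d / 2"
  have e0: "0 < \<epsilon>" using d0 by (simp add: \<epsilon>_def)
  have e2: "2 * \<epsilon> = d" by (simp add: \<epsilon>_def)
  have lowphi: "m \<le> cmod (deriv \<phi> \<xi>)" if "dist \<xi> c0 \<le> \<epsilon>" for \<xi>
  proof -
    have "dist \<xi> c0 < d" using that e0 e2 by linarith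
    then have l: "cmod (deriv \<phi> \<xi> - deriv \<phi> c0) < m" using d by (simp add: dist_norm)
    have "cmod (deriv \<phi> c0) \<le> cmod (deriv \<phi> \<xi>) + cmod (deriv \<phi> c0 - deriv \<phi> \<xi>)"
      by (rule norm_triangle_sub)
    moreover have "cmod (deriv \<phi> c0 - deriv \<phi> \<xi>) = cmod (deriv \<phi> \<xi> - deriv \<phi> c0)"
      by (rule norm_minus_commute)
    ultimately show ?thesis using l m2 by linarith
  qed
  have "compact (\<phi> ` cball c0 \<epsilon>)"
    by (intro compact_continuous_image continuous_on_subset[OF holomorphic_on_imp_continuous_on[OF hphi]]) auto
  then obtain M where M: "\<forall>y\<in>\<phi> ` cball c0 \<epsilon>. norm y \<le> M"
    using compact_imp_bounded bounded_iff by metis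
  have M0: "0 \<le> M" using M e0 by (metis centre_in_cball image_eqI less_imp_le norm_ge_zero order_trans)
  obtain Cw where Cw: "\<forall>z\<in>ball 0 1. (1 - (norm z)\<^sup>2) * norm (deriv w z) \<le> Cw"
    using wB unfolding Bloch_def by blast
  have "cmod (deriv w 0) \<le> Cw" using Cw[rule_format, of 0] by simp
  then have Cw0: "0 \<le> Cw" using norm_ge_zero[of "deriv w 0"] by linarith
  define \<delta> where "\<delta> = cmod (w z0)"
  have dl0: "0 < \<delta>" using z0 by (simp add: \<delta>_def)
  define r0 where "r0 = (1 - cmod z0) / 2"
  have z01: "cmod z0 < 1" using z0 by simp
  have nz: "0 \<le> cmod z0" by simp
  have r0a: "0 < r0" using z01 by (simp add: r0_def)
  have r0d: "2 * r0 = 1 - cmod z0" by (simp add: r0_def)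
  have r0b: "r0 \<le> 1/2" using r0d nz by linarith
  have r0c: "r0 \<le> 1" using r0b by linarith
  note r0 = r0a r0c r0b r0d
  define x where "x = xs r0"
  have hxpos: "\<And>k. 0 < x k" unfolding x_def by (rule xs_pos[OF r0(1)])
  have hxle: "\<And>k. x k \<le> r0" unfolding x_def by (rule xs_le[OF r0(1)])
  have hxhalf: "\<And>k. x k \<le> 1/2" using hxle r0(3) order_trans by blast
  have hxstep: "\<And>k. x (Suc k) * (16 * 20 ^ Suc k) \<le> x k" unfolding x_def by (rule xs_step[OF r0(1)])
  have hxlog: "\<And>k. 20 ^ k \<le> ln (exp 1 / x k)" unfolding x_def by (rule xs_log[OF r0(1,2)])
  have ex: "\<exists>b. cmod b = 1 - x k \<and> cmod (w z0) \<le> cmod (w b)" for k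
  proof (rule maxmod[OF hw])
    show "cmod z0 < 1 - x k" using hxle[of k] r0 by linarith
    show "1 - x k < 1" using hxpos[of k] by linarith
  qed
  define a where "a = (\<lambda>k. SOME b. cmod b = 1 - x k \<and> cmod (w z0) \<le> cmod (w b))"
  have ha: "cmod (a k) = 1 - x k \<and> cmod (w z0) \<le> cmod (w (a k))" for k
    unfolding a_def by (rule someI_ex[OF ex])
  have hax: "\<And>k. cmod (a k) = 1 - x k" using ha by blast
  have hwa: "\<And>k. \<delta> \<le> cmod (w (a k))" using ha \<delta>_def by blast
  note HH = hax hxpos hxhalf hxstep hxlog
  define F where "F = FF a"
  define f where "f = (\<lambda>z. c0 + of_real \<epsilon> * F z)"
  have fH: "f \<in> H_log_infty"
    unfolding H_log_infty_def
  proof (intro CollectI conjI exI ballI)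
    show "f holomorphic_on ball 0 1"
      unfolding f_def F_def using FF_holo[OF HH] by (intro holomorphic_intros)
    fix z :: complex assume zb: "z \<in> ball 0 1"
    then have z1: "cmod z < 1" by simp
    define L where "L = ln (exp 1 / (1 - cmod z))"
    have L1: "1 \<le> L" unfolding L_def by (rule ln_ge1[OF z1])
    have FL: "cmod (F z) \<le> 8 * L" unfolding F_def L_def by (rule FF_bound[OF HH z1])
    have "cmod (f z) \<le> cmod c0 + cmod (of_real \<epsilon> * F z)" unfolding f_def by (rule norm_triangle_ineq)
    also have "cmod (of_real \<epsilon> * F z) = \<epsilon> * cmod (F z)" using e0 by (simp add: norm_mult)
    also have "\<epsilon> * cmod (F z) \<le> \<epsilon> * (8 * L)" using FL e0 by (intro mult_left_mono) auto
    also have "cmod c0 \<le> cmod c0 * L" using L1 by (simp add: mult_le_cancel_left1)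
    then have "cmod c0 + \<epsilon> * (8 * L) \<le> (cmod c0 + 8 * \<epsilon>) * L" by (simp add: algebra_simps)
    finally have "cmod (f z) \<le> (cmod c0 + 8 * \<epsilon>) * L" by simp
    then show "cmod (f z) / ln (exp 1 / (1 - cmod z)) \<le> cmod c0 + 8 * \<epsilon>"
      using L1 unfolding L_def[symmetric] by (simp add: pos_divide_le_eq)
  qed
  then have "weighted_superposition \<phi> w f \<in> Bloch" using H by blast
  then obtain Cg where Cg: "\<forall>z\<in>ball 0 1. (1 - (norm z)\<^sup>2) * norm (deriv (\<lambda>z. w z * \<phi> (f z)) z) \<le> Cg"
    unfolding Bloch_def weighted_superposition_def by blast
  define P where "P = \<delta> * m * \<epsilon>"
  have P0: "0 < P" using dl0 m0 e0 by (simp add: P_def)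
  obtain j where j: "((3 * Cg + 3 * Cw * M) / P + 12) / 2 < 10 ^ j"
    using real_arch_pow[of 10 "((3 * Cg + 3 * Cw * M) / P + 12) / 2"] by auto
  have jP: "3 * Cg + 3 * Cw * M < P * (2 * 10 ^ j - 12)"
  proof -
    have "(3 * Cg + 3 * Cw * M) / P < 2 * 10 ^ j - 12" using j by (simp add: field_simps)
    then show ?thesis using P0 by (simp add: pos_divide_less_eq mult.commute)
  qed
  have aj: "cmod (a j) < 1" by (rule a_lt1[OF HH])
  have ajb: "a j \<in> ball 0 1" using aj by simp
  define D where "D = (\<Sum>k. Bk' a k (a j))"
  have dF: "(F has_field_derivative D) (at (a j))"
    unfolding F_def D_def by (rule FF_deriv(1)[OF HH aj])
  have Fa: "cmod (F (a j)) \<le> 1/2" unfolding F_def by (rule FF_at[OF HH])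
  have fdist: "dist (f (a j)) c0 \<le> \<epsilon>"
  proof -
    have "dist (f (a j)) c0 = \<epsilon> * cmod (F (a j))" using e0 by (simp add: f_def dist_norm norm_mult)
    also have "\<dots> \<le> \<epsilon> * 1" using Fa e0 by (intro mult_left_mono) auto
    finally show ?thesis by simp
  qed
  have phi'low: "m \<le> cmod (deriv \<phi> (f (a j)))" by (rule lowphi[OF fdist])
  have phiM: "cmod (\<phi> (f (a j))) \<le> M" using M fdist by (simp add: dist_commute)
  have KD: "2 * 10^j - 12 \<le> 3 * cmod (kk (a j) * D)" unfolding D_def by (rule FF'_at[OF HH])
  have dw: "(w has_field_derivative deriv w (a j)) (at (a j))" by (rule holomorphic_derivI[OF hw open_ball ajb])
  have df: "(f has_field_derivative of_real \<epsilon> * D) (at (a j))"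
    unfolding f_def using DERIV_add[OF DERIV_const DERIV_cmult[OF dF], of c0 "of_real \<epsilon>"] by simp
  have dphi: "(\<phi> has_field_derivative deriv \<phi> (f (a j))) (at (f (a j)))"
    by (rule holomorphic_derivI[OF hphi open_UNIV]) simp
  have dc: "((\<lambda>z. \<phi> (f z)) has_field_derivative deriv \<phi> (f (a j)) * (of_real \<epsilon> * D)) (at (a j))"
    by (rule DERIV_chain2[OF dphi df])
  have dg: "((\<lambda>z. w z * \<phi> (f z)) has_field_derivative deriv w (a j) * \<phi> (f (a j)) + deriv \<phi> (f (a j)) * (of_real \<epsilon> * D) * w (a j)) (at (a j))"
    by (rule DERIV_mult[OF dw dc])
  have eqd: "deriv (\<lambda>z. w z * \<phi> (f z)) (a j) = deriv w (a j) * \<phi> (f (a j)) + deriv \<phi> (f (a j)) * (of_real \<epsilon> * D) * w (a j)"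
    by (rule DERIV_imp_deriv[OF dg])
  define K where "K = kk (a j)"
  have nK: "cmod K = 1 - (cmod (a j))\<^sup>2" unfolding K_def by (rule norm_kk[OF a_le1[OF HH]])
  have bg: "cmod (K * deriv (\<lambda>z. w z * \<phi> (f z)) (a j)) \<le> Cg"
    using Cg ajb nK by (simp add: norm_mult)
  have spl: "K * deriv (\<lambda>z. w z * \<phi> (f z)) (a j) = K * deriv w (a j) * \<phi> (f (a j)) + w (a j) * deriv \<phi> (f (a j)) * of_real \<epsilon> * (K * D)"
    unfolding eqd by (simp add: algebra_simps)
  have T1: "cmod (K * deriv w (a j) * \<phi> (f (a j))) \<le> Cw * M"
  proof -
    have "cmod (K * deriv w (a j) * \<phi> (f (a j))) = ((1 - (cmod (a j))\<^sup>2) * cmod (deriv w (a j))) * cmod (\<phi> (f (a j)))"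
      using nK by (simp add: norm_mult)
    also have "\<dots> \<le> Cw * M" using Cw ajb phiM Cw0 by (intro mult_mono) auto
    finally show ?thesis .
  qed
  have T2: "P * cmod (K * D) \<le> cmod (w (a j) * deriv \<phi> (f (a j)) * of_real \<epsilon> * (K * D))"
  proof -
    have "\<delta> * m \<le> cmod (w (a j)) * cmod (deriv \<phi> (f (a j)))"
      using hwa[of j] phi'low dl0 m0 by (intro mult_mono) auto
    then have "(\<delta> * m) * (\<epsilon> * cmod (K * D)) \<le> (cmod (w (a j)) * cmod (deriv \<phi> (f (a j)))) * (\<epsilon> * cmod (K * D))"
      using e0 by (intro mult_right_mono) auto
    then show ?thesis using e0 by (simp add: P_def norm_mult mult.assoc)
  qed
  have tri: "cmod (w (a j) * deriv \<phi> (f (a j)) * of_real \<epsilon> * (K * D)) \<le> cmod (K * deriv (\<lambda>z. w z * \<phi> (f z)) (a j)) + cmod (K * deriv w (a j) * \<phi> (f (a j)))"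
    using norm_triangle_ineq4[of "K * deriv (\<lambda>z. w z * \<phi> (f z)) (a j)" "K * deriv w (a j) * \<phi> (f (a j))"]
    unfolding spl by simp
  have "P * (2 * 10^j - 12) \<le> P * (3 * cmod (K * D))"
    using KD P0 unfolding K_def by (intro mult_left_mono) auto
  moreover have "P * (3 * cmod (K * D)) = 3 * (P * cmod (K * D))" by simp
  ultimately show False using jP T1 T2 tri bg by linarith
qed

theorem corollary2:
  fixes w \<phi> :: "complex \<Rightarrow> complex"
  assumes "w holomorphic_on ball 0 1"
    and "\<exists>z\<in>ball 0 1. w z \<noteq> 0"
    and "\<phi> holomorphic_on UNIV"
    and "\<exists>z. \<phi> z \<noteq> 0"
  shows "(\<forall>f\<in>H_log_infty. weighted_superposition \<phi> w f \<in> Bloch) \<longleftrightarrow>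
         (w \<in> Bloch \<and> (\<exists>c. \<forall>z. \<phi> z = c))"
proof
  assume H: "\<forall>f\<in>H_log_infty. weighted_superposition \<phi> w f \<in> Bloch"
  obtain z1 where z1: "\<phi> z1 \<noteq> 0" using assms(4) by blast
  have wB: "w \<in> Bloch" by (rule w_bloch[OF assms(1) z1 H])
  obtain z0 where z0: "z0 \<in> ball 0 1" "w z0 \<noteq> 0" using assms(2) by blast
  show "w \<in> Bloch \<and> (\<exists>c. \<forall>z. \<phi> z = c)"
    using wB phi_const[OF assms(1) z0 assms(3) wB H] by blast
next
  assume "w \<in> Bloch \<and> (\<exists>c. \<forall>z. \<phi> z = c)"
  then obtain c where "w \<in> Bloch" "\<forall>z. \<phi> z = c" by blast
  then show "\<forall>f\<in>H_log_infty. weighted_superposition \<phi> w f \<in> Bloch" by (rule backward)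
qed

end
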